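(* Let $N\ge3$ and $p>p_S$. There is no function $u\in C^2(0,\infty)$ satisfying \[ u''+\frac{N-1}{s}u'+f(u)=0\ (0<s<\infty),\quad u(s)=As^{-\theta}(1+o(1))\ (s\downarrow0),\quad u(s)\to0\ (s\to\infty),\quad u>0\ \text{on }(0,\infty). \]
   Context: $f(u):=-u+u^p$, $\theta:=\frac{2}{p-1}$, $A:=\{\theta(N-2-\theta)\}^{1/(p-1)}$, $p_S:=\frac{N+2}{N-2}$. *)

theory Defs
  imports "HOL-Analysis.Analysis"
begin

definition fnl :: "real \<Rightarrow> real \<Rightarrow> real" where
  "fnl p u = - u + u powr p"

definition theta :: "real \<Rightarrow> real" where
  "theta p = 2 / (p - 1)"

definition Aconst :: "nat \<Rightarrow> real \<Rightarrow> real" where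
  "Aconst N p = (theta p * (real N - 2 - theta p)) powr (1 / (p - 1))"

definition pS :: "nat \<Rightarrow> real" where
  "pS N = (real N + 2) / (real N - 2)"

end

theory Submission
  imports Defs
begin

lemma alg0:
  fixes s w U V W M q Z :: real
  shows "(s*(s*w)) * (V*(Z + U - W) - U*V + W*V) + (M+3)*(s*w)*(V^2/2 - U^2/2 + U*W*q)
    + (M+1)/2 * ((s*w)*(U*(Z + U - W)+V*V) + (M+2)*w*(U*V))
   - (s*w)*(((M+3)*q - (M+1)/2) * (U*W) - U^2) = (s*Z + (M+2)*V) * (s*w*V + (M+1)/2*w*U)"
  by (simp add: algebra_simps power2_eq_square divide_simps)
lemma alg:
  fixes s w U V W M p :: real
  assumes "s > 0" "p + 1 \<noteq> 0"
  shows "(s*(s*w)) * (V*(-(M+2)/s*V + U - W) - U*V + W*V) + (M+3)*(s*w)*(V^2/2 - U^2/2 + U*W/(p+1))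
    + (M+1)/2 * ((s*w)*(U*(-(M+2)/s*V + U - W)+V*V) + (M+2)*w*(U*V))
   = (s*w)*(((M+3)/(p+1) - (M+1)/2) * (U*W) - U^2)"
proof -
  have z0: "s * (-(M+2)/s*V) = -(M+2)*V" using assms by (simp add: field_simps)
  have z: "s * (-(M+2)/s*V) + (M+2)*V = 0" unfolding z0 by (simp add: algebra_simps)
  have "(s*(s*w)) * (V*(-(M+2)/s*V + U - W) - U*V + W*V) + (M+3)*(s*w)*(V^2/2 - U^2/2 + U*W*(1/(p+1)))
    + (M+1)/2 * ((s*w)*(U*(-(M+2)/s*V + U - W)+V*V) + (M+2)*w*(U*V))
   - (s*w)*(((M+3)*(1/(p+1)) - (M+1)/2) * (U*W) - U^2) = 0"
    using alg0[of s w V "-(M+2)/s*V" U W M "1/(p+1)", unfolded z] by simp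
  then show ?thesis by (simp add: field_simps)
qed

locale sol =
  fixes m :: nat and p :: real and u u' u'' :: "real \<Rightarrow> real"
  assumes p1: "p > 1"
    and cneg: "real (m+3) / (p+1) \<le> (real m + 1) / 2"
    and du: "\<And>s. s > 0 \<Longrightarrow> (u has_real_derivative u' s) (at s)"
    and du': "\<And>s. s > 0 \<Longrightarrow> (u' has_real_derivative u'' s) (at s)"
    and eq: "\<And>s. s > 0 \<Longrightarrow> u'' s = - (real m + 2) / s * u' s + u s - u s powr p"
    and pos: "\<And>s. s > 0 \<Longrightarrow> u s > 0"
begin

definition Q :: "real \<Rightarrow> real" where
  "Q s = (u' s)^2/2 - (u s)^2/2 + u s powr (p+1)/(p+1)"

definition P :: "real \<Rightarrow> real" where
  "P s = s^(m+3) * Q s + (real m + 1)/2 * (s^(m+2) * (u s * u' s))"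

lemma P_deriv:
  assumes s: "s > 0"
  shows "(P has_real_derivative
     s^(m+2) * ((real (m+3)/(p+1) - (real m + 1)/2) * u s powr (p+1) - (u s)^2)) (at s)"
proof -
  have pw: "((\<lambda>x. u x powr (p+1)) has_real_derivative (p+1) * u s powr p * u' s) (at s)"
    using DERIV_fun_powr[OF du[OF s] pos[OF s], of "p+1"] by simp
  have dQ: "(Q has_real_derivative u' s * u'' s - u s * u' s + u s powr p * u' s) (at s)"
    unfolding Q_def[abs_def]
    using p1 pos[OF s] by (auto intro!: derivative_eq_intros du[OF s] du'[OF s] pw)
  have dR: "((\<lambda>z. u z * u' z) has_real_derivative u s * u'' s + u' s * u' s) (at s)"
    by (rule DERIV_mult'[OF du[OF s] du'[OF s]])
  have d3: "((\<lambda>z. z^(m+3)) has_real_derivative real (m+3) * s^(m+2)) (at s)"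
    using DERIV_pow[of "m+3" s] by simp
  have d2: "((\<lambda>z. z^(m+2)) has_real_derivative real (m+2) * s^(m+1)) (at s)"
    using DERIV_pow[of "m+2" s] by simp
  have "(P has_real_derivative
     (s^(m+3) * (u' s * u'' s - u s * u' s + u s powr p * u' s) + real (m+3) * s^(m+2) * Q s)
     + (real m + 1)/2 * (s^(m+2) * (u s * u'' s + u' s * u' s) + real (m+2) * s^(m+1) * (u s * u' s))) (at s)"
    unfolding P_def[abs_def]
    by (intro DERIV_add DERIV_mult' DERIV_cmult d3 d2 dQ dR)
  moreover have e: "u'' s = - (real m + 2) / s * u' s + u s - u s powr p" using eq s by blast
  have up: "u s powr (p+1) = u s * u s powr p" using pos[OF s] by (simp add: powr_add)
  have "(s^(m+3) * (u' s * u'' s - u s * u' s + u s powr p * u' s) + real (m+3) * s^(m+2) * Q s)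
     + (real m + 1)/2 * (s^(m+2) * (u s * u'' s + u' s * u' s) + real (m+2) * s^(m+1) * (u s * u' s))
     = s^(m+2) * ((real (m+3)/(p+1) - (real m + 1)/2) * u s powr (p+1) - (u s)^2)"
  proof -
    have pw3: "s ^ (m+3) = s * (s * s ^ (m+1))" "s ^ (m+2) = s * s ^ (m+1)" by (simp_all add: eval_nat_numeral)
    show ?thesis
      using alg[where s=s and w="s^(m+1)" and U="u s" and V="u' s" and W="u s powr p" and M="real m" and p=p] s p1
      unfolding e up Q_def pw3 by (simp add: add.commute)
  qed
  ultimately show ?thesis by simp
qed

lemma P_dec:
  assumes "0 < a" "a < b" shows "P b < P a"
proof (rule DERIV_neg_imp_decreasing[OF assms(2)])
  fix x assume x: "a \<le> x" "x \<le> b"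
  hence x0: "x > 0" using assms by simp
  have c: "real (m+3)/(p+1) - (real m + 1)/2 \<le> 0" using cneg by simp
  have "(real (m+3)/(p+1) - (real m + 1)/2) * u x powr (p+1) \<le> 0"
    using c by (simp add: mult_nonpos_nonneg)
  moreover have "(u x)^2 > 0" using pos[OF x0] by simp
  ultimately have "(real (m+3)/(p+1) - (real m + 1)/2) * u x powr (p+1) - (u x)^2 < 0"
    by linarith
  hence "x^(m+2) * ((real (m+3)/(p+1) - (real m + 1)/2) * u x powr (p+1) - (u x)^2) < 0"
    using x0 by (intro mult_pos_neg) auto
  then show "\<exists>y. (P has_real_derivative y) (at x) \<and> y < 0" using P_deriv[OF x0] by blast
qed

lemma near0:
  assumes A: "A > 0" and th: "\<theta> > 0" "\<theta> * (p - 1) = 2" and e: "real m + 1 - 2*\<theta> > 0"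
    and lim: "((\<lambda>s. u s / (A * s powr (-\<theta>))) \<longlongrightarrow> 1) (at_right 0)"
  shows "P 1 \<le> 0"
proof (rule ccontr)
  assume "\<not> P 1 \<le> 0"
  hence P1: "P 1 > 0" by simp
  define K where "K = 2^(m+3)*8*A^2 + 2^(m+3)*(2*A) powr (p+1)/(p+1) + (real m + 1)/2*(2^(m+2)*8*A^2)"
  define e where "e = real m + 1 - 2*\<theta>"
  have ev1: "\<forall>\<^sub>F s in at_right 0. u s / (A * s powr (-\<theta>)) < 2"
    using order_tendstoD(2)[OF lim] by simp
  have ev2: "\<forall>\<^sub>F s in at_right 0. K * s powr e < P 1"
  proof -
    have "((\<lambda>s. s powr e) \<longlongrightarrow> 0) (at_right 0)"
      by (rule tendsto_zero_powrI) (auto simp: e_def intro!: tendsto_ident_at eventually_at_rightI[of 0 1] e)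
    hence "((\<lambda>s. K * s powr e) \<longlongrightarrow> K * 0) (at_right 0)" by (intro tendsto_intros)
    thus ?thesis using order_tendstoD(2) P1 by fastforce
  qed
  obtain b where b: "b > 0" and hb: "\<And>y. 0 < y \<Longrightarrow> y < b \<Longrightarrow>
     u y / (A * y powr (-\<theta>)) < 2 \<and> K * y powr e < P 1"
    using eventually_conj[OF ev1 ev2] unfolding eventually_at_right_field by auto
  have ub: "u y < 2 * A * y powr (-\<theta>)" if "0 < y" "y < b" for y
  proof -
    have "A * y powr (-\<theta>) > 0" using A that by simp
    thus ?thesis using hb[OF that] by (simp add: field_simps)
  qed
  define s where "s = min (b/3) (1/3)"
  have s0: "s > 0" and sb: "2 * s < b" and s1: "2 * s < 1" using b by (auto simp: s_def)
  have "s < 2 * s" using s0 by simp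
  from MVT2[OF this, of u u'] obtain X where X: "s < X" "X < 2 * s" "u (2 * s) - u s = (2 * s - s) * u' X"
    using du s0 by force
  define a where "a = s powr (-\<theta>)"
  have a0: "a > 0" using s0 by (simp add: a_def)
  have "(2 * s) powr (-\<theta>) \<le> a" unfolding a_def by (rule powr_mono2') (use th s0 in auto)
  hence "u (2 * s) < 2*A*a" using ub[of "2 * s"] s0 sb A by (smt (verit) mult_left_mono)
  moreover have "u s < 2*A*a" using ub[of s] s0 sb unfolding a_def by simp
  moreover have "u s > 0" "u (2 * s) > 0" using pos s0 by auto
  ultimately have sV: "s * \<bar>u' X\<bar> \<le> 4*A*a" using X(3) by (simp add: abs_if)
  have X0: "X > 0" using X s0 by simp
  have "X powr (-\<theta>) \<le> a" unfolding a_def by (rule powr_mono2') (use th s0 X in auto)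
  hence U: "u X < 2*A*a" using ub[of X] X0 X sb A by (smt (verit) mult_left_mono)
  have U0: "u X > 0" using pos X0 by simp
  define U V where "U = u X" and "V = u' X"
  have Xp3: "X^(m+3) \<le> 2^(m+3) * s^(m+3)"
  proof -
    have "X^(m+3) \<le> (2 * s)^(m+3)" using power_mono[of X "2 * s" "m+3"] X X0 by simp
    thus ?thesis by (simp only: power_mult_distrib)
  qed
  have Xp2: "X^(m+2) \<le> 2^(m+2) * s^(m+2)"
  proof -
    have "X^(m+2) \<le> (2 * s)^(m+2)" using power_mono[of X "2 * s" "m+2"] X X0 by simp
    thus ?thesis by (simp only: power_mult_distrib)
  qed
  have t1: "X^(m+3) * V^2 \<le> 2^(m+3) * 16 * A^2 * (s^(m+1) * a^2)"
  proof -
    have "X^(m+3) * V^2 \<le> 2^(m+3) * s^(m+3) * V^2" using Xp3 by (simp add: mult_right_mono)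
    also have "\<dots> = 2^(m+3) * s^(m+1) * (s * \<bar>V\<bar>)^2" by (simp add: power_mult_distrib eval_nat_numeral)
    also have "\<dots> \<le> 2^(m+3) * s^(m+1) * (4*A*a)^2"
      using sV s0 unfolding V_def by (intro mult_left_mono power_mono) auto
    finally show ?thesis by (simp add: power_mult_distrib mult_ac)
  qed
  have t3: "X^(m+2) * (U * \<bar>V\<bar>) \<le> 2^(m+2) * 8 * A^2 * (s^(m+1) * a^2)"
  proof -
    have "X^(m+2) * (U * \<bar>V\<bar>) \<le> 2^(m+2) * s^(m+2) * (U * \<bar>V\<bar>)"
      using Xp2 U0 unfolding U_def by (simp add: mult_right_mono)
    also have "\<dots> = 2^(m+2) * s^(m+1) * (U * (s * \<bar>V\<bar>))" by (simp add: eval_nat_numeral)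
    also have "\<dots> \<le> 2^(m+2) * s^(m+1) * ((2*A*a) * (4*A*a))"
    proof (rule mult_left_mono)
      show "U * (s * \<bar>V\<bar>) \<le> (2*A*a) * (4*A*a)"
        using mult_mono[of U "2*A*a" "s * \<bar>V\<bar>" "4*A*a"] sV s0 U U0 A a0 unfolding V_def U_def by simp
      show "0 \<le> 2^(m+2) * s^(m+1)" using s0 by simp
    qed
    finally show ?thesis by (simp add: power2_eq_square mult_ac)
  qed
  have t2: "X^(m+3) * U powr (p+1) \<le> 2^(m+3) * (2*A) powr (p+1) * (s^(m+3) * a powr (p+1))"
  proof -
    have "U powr (p+1) \<le> (2*A*a) powr (p+1)" using U U0 p1 unfolding U_def
      by (intro powr_mono2) auto
    also have "\<dots> = (2*A) powr (p+1) * a powr (p+1)" using A a0 by (simp add: powr_mult)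
    finally have "U powr (p+1) \<le> (2*A) powr (p+1) * a powr (p+1)" .
    hence "X^(m+3) * U powr (p+1) \<le> 2^(m+3) * s^(m+3) * ((2*A) powr (p+1) * a powr (p+1))"
      using Xp3 X0 s0 by (intro mult_mono) auto
    thus ?thesis by (simp add: algebra_simps)
  qed
  have id1: "s^(m+1) * a^2 = s powr e"
  proof -
    have "a^2 = s powr (-2*\<theta>)" unfolding a_def using s0 by (simp add: power2_eq_square powr_add[symmetric])
    moreover have "s^(m+1) = s powr (real m + 1)" using powr_realpow[OF s0, of "m+1"] by (simp add: add.commute)
    ultimately show ?thesis using s0 by (simp add: e_def powr_add[symmetric])
  qed
  have id2: "s^(m+3) * a powr (p+1) = s powr e"
  proof -
    have "a powr (p+1) = s powr (-\<theta>*(p+1))" unfolding a_def using s0 by (simp add: powr_powr)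
    also have "-\<theta>*(p+1) = -2 - 2*\<theta>" using th by (simp add: algebra_simps)
    finally have "a powr (p+1) = s powr (-2 - 2*\<theta>)" .
    moreover have "s^(m+3) = s powr (real m + 3)" using powr_realpow[OF s0, of "m+3"] by (simp add: add.commute)
    ultimately have "s^(m+3) * a powr (p+1) = s powr (real m + 3) * s powr (-2 - 2*\<theta>)" by (simp only:)
    also have "\<dots> = s powr (real m + 3 + (-2 - 2*\<theta>))" by (rule powr_add[symmetric])
    finally have "s^(m+3) * a powr (p+1) = s powr (real m + 3 + (-2 - 2*\<theta>))" .
    moreover have "real m + 3 + (-2 - 2*\<theta>) = e" by (simp add: e_def)
    ultimately show ?thesis by simp
  qed
  have "P X \<le> X^(m+3) * V^2 / 2 + X^(m+3) * U powr (p+1) / (p+1) + (real m + 1)/2 * (X^(m+2) * (U * \<bar>V\<bar>))"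
  proof -
    have "X^(m+3) * Q X \<le> X^(m+3) * (V^2/2 + U powr (p+1)/(p+1))"
      unfolding Q_def U_def V_def using X0 by (intro mult_left_mono) auto
    hence "X^(m+3) * Q X \<le> X^(m+3) * V^2 / 2 + X^(m+3) * U powr (p+1) / (p+1)"
      by (simp add: ring_distribs)
    moreover have "(real m + 1)/2 * (X^(m+2) * (U * V)) \<le> (real m + 1)/2 * (X^(m+2) * (U * \<bar>V\<bar>))"
      using X0 U0 by (intro mult_left_mono) (auto simp: U_def)
    ultimately show ?thesis unfolding P_def U_def V_def by linarith
  qed
  also have "\<dots> \<le> K * s powr e"
  proof -
    have "X^(m+3) * V^2 / 2 \<le> 2^(m+3) * 8 * A^2 * s powr e" using t1 id1 by simp
    moreover have "X^(m+3) * U powr (p+1) / (p+1) \<le> 2^(m+3) * (2*A) powr (p+1) / (p+1) * s powr e"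
      using t2 id2 p1 by (simp add: divide_right_mono)
    moreover have "(real m + 1)/2 * (X^(m+2) * (U * \<bar>V\<bar>)) \<le> (real m + 1)/2 * (2^(m+2) * 8 * A^2 * s powr e)"
      using t3 id1 by (intro mult_left_mono) auto
    ultimately have "X^(m+3) * V^2 / 2 + X^(m+3) * U powr (p+1) / (p+1) + (real m + 1)/2 * (X^(m+2) * (U * \<bar>V\<bar>))
       \<le> 2^(m+3) * 8 * A^2 * s powr e + 2^(m+3) * (2*A) powr (p+1) / (p+1) * s powr e + (real m + 1)/2 * (2^(m+2) * 8 * A^2 * s powr e)"
      by linarith
    also have "\<dots> = K * s powr e" unfolding K_def by (simp add: algebra_simps)
    finally show ?thesis .
  qed
  also have "\<dots> < P 1" using hb[of s] s0 sb by simp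
  finally have "P X < P 1" .
  moreover have "P 1 < P X" using P_dec[of X 1] X0 X s1 by simp
  ultimately show False by simp
qed

lemma nearinf:
  assumes lim: "(u \<longlongrightarrow> 0) at_top"
  shows "P 2 \<ge> 0"
proof (rule ccontr)
  assume "\<not> P 2 \<ge> 0"
  hence P2: "P 2 < 0" by simp
  have "((\<lambda>t. u t powr (p - 1)) \<longlongrightarrow> 0) at_top"
  proof (rule tendsto_zero_powrI[OF lim tendsto_const])
    have "0 \<le> u t" if "t \<ge> 1" for t using pos[of t] that by simp
    thus "\<forall>\<^sub>F t in at_top. 0 \<le> u t" by (intro eventually_at_top_linorderI[of 1]) auto
    show "0 < p - 1" using p1 by simp
  qed
  hence "\<forall>\<^sub>F t in at_top. u t powr (p - 1) < 1/2" by (rule order_tendstoD(2)) simp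
  then obtain T0 where T0: "\<And>t. t \<ge> T0 \<Longrightarrow> u t powr (p - 1) < 1/2"
    unfolding eventually_at_top_linorder by auto
  define T where "T = max T0 1"
  have T1: "T \<ge> 1" and TT0: "T \<ge> T0" by (auto simp: T_def)
  have half: "u t - u t powr p \<ge> u t / 2" if "t \<ge> T" for t
  proof -
    have t0: "t > 0" using that T1 by simp
    have "u t powr (1 + (p - 1)) = u t powr 1 * u t powr (p - 1)" by (rule powr_add)
    hence "u t powr p = u t * u t powr (p - 1)" using pos[OF t0] by simp
    moreover have "u t * u t powr (p - 1) \<le> u t * (1/2)"
      using T0[of t] that TT0 pos[OF t0] by (intro mult_left_mono) auto
    ultimately show ?thesis by simp
  qed
  define g where "g t = t^(m+2) * u' t" for t
  have dg: "(g has_real_derivative t^(m+2) * (u t - u t powr p)) (at t)" if "t > 0" for t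
  proof -
    have d2: "((\<lambda>z. z^(m+2)) has_real_derivative real (m+2) * t^(m+1)) (at t)"
      using DERIV_pow[of "m+2" t] by simp
    have "(g has_real_derivative t^(m+2) * u'' t + real (m+2) * t^(m+1) * u' t) (at t)"
      unfolding g_def[abs_def] by (rule DERIV_mult'[OF d2 du'[OF that]])
    moreover have "t^(m+2) * u'' t + real (m+2) * t^(m+1) * u' t = t^(m+2) * (u t - u t powr p)"
    proof -
      have "t^(m+2) * (- (real m + 2) / t * u' t) = - (real m + 2) * t^(m+1) * u' t"
        using that by (simp add: field_simps)
      thus ?thesis unfolding eq[OF that] by (simp add: algebra_simps)
    qed
    ultimately show ?thesis by simp
  qed
  have ginc: "g a < g b" if "T \<le> a" "a < b" for a b
  proof (rule DERIV_pos_imp_increasing[OF that(2)])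
    fix x assume x: "a \<le> x" "x \<le> b"
    hence xT: "x \<ge> T" and x0: "x > 0" using that T1 by auto
    have "u x > 0" using pos[OF x0] .
    hence "u x - u x powr p > 0" using half[OF xT] by linarith
    hence "x^(m+2) * (u x - u x powr p) > 0" using x0 by simp
    thus "\<exists>y. (g has_real_derivative y) (at x) \<and> y > 0" using dg[OF x0] by blast
  qed
  have u'neg: "u' t \<le> 0" if "t \<ge> T" for t
  proof (rule ccontr)
    assume "\<not> u' t \<le> 0"
    hence ut: "u' t > 0" by simp
    have t0: "t > 0" using that T1 by simp
    have u'pos: "u' y > 0" if "y \<ge> t" for y
    proof (cases "y = t")
      case True thus ?thesis using ut by simp
    next
      case False
      hence "g t < g y" using ginc[of t y] \<open>t \<ge> T\<close> \<open>y \<ge> t\<close> by simp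
      moreover have "g t > 0" unfolding g_def using ut t0 by simp
      ultimately have "y^(m+2) * u' y > 0" unfolding g_def by simp
      moreover have "y > 0" using t0 \<open>y \<ge> t\<close> by simp
      ultimately show ?thesis using zero_less_mult_pos[of "y^(m+2)" "u' y"] by simp
    qed
    have mono: "u t \<le> u y" if "y \<ge> t" for y
    proof (rule DERIV_nonneg_imp_nondecreasing[OF that])
      fix x assume "t \<le> x" "x \<le> y"
      thus "\<exists>d. (u has_real_derivative d) (at x) \<and> d \<ge> 0"
        using du[of x] u'pos[of x] t0 by (intro exI[of _ "u' x"]) auto
    qed
    have "\<forall>\<^sub>F y in at_top. u y < u t" using order_tendstoD(2)[OF lim] pos[OF t0] by simp
    then obtain Y where "\<And>y. y \<ge> Y \<Longrightarrow> u y < u t" unfolding eventually_at_top_linorder by auto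
    hence "u (max Y t) < u t" by simp
    moreover have "u t \<le> u (max Y t)" by (rule mono) simp
    ultimately show False by simp
  qed
  define C where "C = - g T"
  have bV: "t^(m+2) * \<bar>u' t\<bar> \<le> C" if "t \<ge> T" for t
  proof (cases "t = T")
    case True thus ?thesis using u'neg[of T] unfolding C_def g_def by simp
  next
    case False
    hence "g T < g t" using ginc[of T t] that by simp
    thus ?thesis using u'neg[OF that] unfolding C_def g_def by simp
  qed
  have C0: "C \<ge> 0"
  proof -
    have "0 \<le> T^(m+2) * \<bar>u' T\<bar>" using T1 by simp
    thus ?thesis using bV[of T] by linarith
  qed
  have udec: "u y \<le> u x" if "T \<le> x" "x \<le> y" for x y
  proof (rule DERIV_nonpos_imp_nonincreasing[OF that(2)])
    fix z assume "x \<le> z" "z \<le> y"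
    thus "\<exists>d. (u has_real_derivative d) (at z) \<and> d \<le> 0"
    proof (intro exI conjI)
      show "(u has_real_derivative u' z) (at z)" using \<open>x \<le> z\<close> that T1 by (intro du) linarith
      show "u' z \<le> 0" using \<open>x \<le> z\<close> that by (intro u'neg) linarith
    qed
  qed
  have uV: "u t \<le> 2 * \<bar>u' (t - 1)\<bar>" if "t \<ge> T + 1" for t
  proof -
    have "t - 1 < t" by simp
    have dd: "(u' has_real_derivative u'' x) (at x)" if "t - 1 \<le> x" "x \<le> t" for x
    proof -
      have "x > 0" using that \<open>t \<ge> T + 1\<close> T1 by linarith
      thus ?thesis by (rule du')
    qed
    from MVT2[OF \<open>t - 1 < t\<close> dd] obtain \<xi> where xi: "t - 1 < \<xi>" "\<xi> < t" "u' t - u' (t - 1) = (t - (t - 1)) * u'' \<xi>"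
      by blast
    have xi0: "\<xi> > 0" and xiT: "\<xi> \<ge> T" using xi that T1 by auto
    define c where "c = - (real m + 2) / \<xi> * u' \<xi>"
    have "u'' \<xi> = c + (u \<xi> - u \<xi> powr p)" using eq[OF xi0] unfolding c_def by simp
    moreover have "c \<ge> 0" using u'neg[OF xiT] xi0 unfolding c_def
      by (simp add: divide_nonpos_pos mult_nonpos_nonpos)
    moreover have "u t \<le> u \<xi>" using udec[of \<xi> t] xiT xi by simp
    ultimately have "u'' \<xi> \<ge> u t / 2" using half[OF xiT] by linarith
    hence "u t \<le> 2 * (u' t - u' (t - 1))" using xi(3) by simp
    moreover have "u' t \<le> 0" "u' (t - 1) \<le> 0" using u'neg that by auto
    ultimately show ?thesis by simp
  qed
  define D where "D = 2^(m+3) * C"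
  have bU: "t^(m+2) * u t \<le> D" if "t \<ge> T + 1" "t \<ge> 2" for t
  proof -
    have t1: "t - 1 \<ge> T" "t - 1 > 0" using that T1 by auto
    have "t \<le> 2 * (t - 1)" using that by simp
    hence "t^(m+2) \<le> (2 * (t - 1))^(m+2)" using that by (intro power_mono) auto
    hence tp: "t^(m+2) \<le> 2^(m+2) * (t - 1)^(m+2)" by (simp only: power_mult_distrib)
    have "t^(m+2) * u t \<le> t^(m+2) * (2 * \<bar>u' (t - 1)\<bar>)"
      using uV[OF that(1)] that by (intro mult_left_mono) auto
    also have "\<dots> \<le> 2^(m+2) * (t - 1)^(m+2) * (2 * \<bar>u' (t - 1)\<bar>)"
      using tp by (intro mult_right_mono) auto
    also have "\<dots> = 2^(m+3) * ((t - 1)^(m+2) * \<bar>u' (t - 1)\<bar>)" by (simp add: power_add mult_ac)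
    also have "\<dots> \<le> 2^(m+3) * C" using bV[OF t1(1)] by (intro mult_left_mono) auto
    finally show ?thesis unfolding D_def .
  qed
  define K where "K = D^2/2 + (real m + 1)/2 * (D * C)"
  have lowP: "t * P t \<ge> - K" if "t \<ge> T + 1" "t \<ge> 2" for t
  proof -
    have t0: "t > 0" using that by simp
    define U V where "U = u t" and "V = u' t"
    have U0: "U > 0" unfolding U_def using pos[OF t0] .
    have W: "t^(m+2) * U \<le> D" "t^(m+2) * U \<ge> 0" unfolding U_def using bU[OF that] U0 t0 by (auto simp: U_def)
    have Y: "t^(m+2) * \<bar>V\<bar> \<le> C" unfolding V_def using bV[of t] that T1 by simp
    have tm1: "t \<le> t^(m+1)" using power_increasing[of 1 "m+1" t] that by simp
    have tm2: "t \<le> t^(m+2)" using power_increasing[of 1 "m+2" t] that by simp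
    have e1: "t * (t^(m+3) * U^2) \<le> D^2"
    proof -
      have "t * (t^(m+3) * U^2) \<le> t^(m+1) * (t^(m+3) * U^2)"
        using tm1 t0 by (intro mult_right_mono) auto
      also have "\<dots> = (t^(m+2) * U)^2"
      proof -
        have "t^(m+1) * t^(m+3) = t^(m+2) * t^(m+2)" unfolding power_add[symmetric] by (rule arg_cong[where f="\<lambda>k. t^k"]) simp
        thus ?thesis by (simp add: power2_eq_square mult_ac)
      qed
      also have "\<dots> \<le> D^2" using W by (intro power_mono) auto
      finally show ?thesis .
    qed
    have e2: "t * (t^(m+2) * (U * \<bar>V\<bar>)) \<le> D * C"
    proof -
      have "t * (t^(m+2) * (U * \<bar>V\<bar>)) \<le> t^(m+2) * (t^(m+2) * (U * \<bar>V\<bar>))"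
        using tm2 U0 t0 by (intro mult_right_mono) auto
      also have "\<dots> = (t^(m+2) * U) * (t^(m+2) * \<bar>V\<bar>)" by (simp add: mult_ac)
      also have "\<dots> \<le> D * C" using W Y C0 t0 by (intro mult_mono) auto
      finally show ?thesis .
    qed
    have "P t \<ge> - (t^(m+3) * U^2) / 2 - (real m + 1)/2 * (t^(m+2) * (U * \<bar>V\<bar>))"
    proof -
      have "t^(m+3) * Q t \<ge> t^(m+3) * (- (U^2/2))"
        unfolding Q_def U_def using t0 p1 by (intro mult_left_mono) auto
      moreover have "(real m + 1)/2 * (t^(m+2) * (U * V)) \<ge> (real m + 1)/2 * (- (t^(m+2) * (U * \<bar>V\<bar>)))"
        using t0 U0 by (intro mult_left_mono) (auto simp: abs_if)
      moreover have "P t = t^(m+3) * Q t + (real m + 1)/2 * (t^(m+2) * (U * V))"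
        unfolding P_def U_def V_def by simp
      moreover have "t^(m+3) * (- (U^2/2)) = - (t^(m+3) * U^2) / 2" by simp
      moreover have "(real m + 1)/2 * (- (t^(m+2) * (U * \<bar>V\<bar>))) = - ((real m + 1)/2 * (t^(m+2) * (U * \<bar>V\<bar>)))" by simp
      ultimately show ?thesis by linarith
    qed
    hence "t * P t \<ge> t * (- (t^(m+3) * U^2) / 2 - (real m + 1)/2 * (t^(m+2) * (U * \<bar>V\<bar>)))"
      using t0 by (intro mult_left_mono) auto
    also have "t * (- (t^(m+3) * U^2) / 2 - (real m + 1)/2 * (t^(m+2) * (U * \<bar>V\<bar>)))
       = - (t * (t^(m+3) * U^2)) / 2 - (real m + 1)/2 * (t * (t^(m+2) * (U * \<bar>V\<bar>)))"
      by (simp add: algebra_simps)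
    also have "\<dots> \<ge> - K"
    proof -
      have "(real m + 1)/2 * (t * (t^(m+2) * (U * \<bar>V\<bar>))) \<le> (real m + 1)/2 * (D * C)"
        using e2 by (intro mult_left_mono) auto
      thus ?thesis using e1 unfolding K_def by linarith
    qed
    finally show ?thesis .
  qed
  define t where "t = max (max (T + 1) 3) (K / (- P 2) + 1)"
  have t: "t \<ge> T + 1" "t \<ge> 2" "t > 2" "t > K / (- P 2)" unfolding t_def by auto
  have "t * P t \<ge> - K" using lowP[OF t(1,2)] .
  moreover have "P t < P 2" using P_dec[of 2 t] t by simp
  moreover have "K < t * (- P 2)" using t(4) P2 by (simp add: field_simps)
  ultimately have "t * P t > t * P 2" by (simp add: algebra_simps)
  hence "P t > P 2" using t by (simp add: mult_less_cancel_left)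
  with \<open>P t < P 2\<close> show False by simp
qed

lemma contra: "False"
  if "\<theta> > 0" "\<theta> * (p - 1) = 2" "real m + 1 - 2*\<theta> > 0" "A > 0"
     "((\<lambda>s. u s / (A * s powr (-\<theta>))) \<longlongrightarrow> 1) (at_right 0)" "(u \<longlongrightarrow> 0) at_top"
proof -
  have "P 1 \<le> 0" using near0 that by blast
  moreover have "P 2 \<ge> 0" using nearinf that by blast
  moreover have "P 2 < P 1" using P_dec[of 1 2] by simp
  ultimately show False by simp
qed

end

theorem lemma4p7:
  fixes N :: nat and p :: real
  assumes "N \<ge> 3" and "p > pS N"
  shows "\<not> (\<exists>u u' u'' :: real \<Rightarrow> real.
            (\<forall>s>0. (u has_real_derivative u' s) (at s)) \<and>
            (\<forall>s>0. (u' has_real_derivative u'' s) (at s)) \<and>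
            continuous_on {0<..} u'' \<and>
            (\<forall>s>0. u'' s + (real N - 1) / s * u' s + fnl p (u s) = 0) \<and>
            ((\<lambda>s. u s / (Aconst N p * s powr (- theta p))) \<longlongrightarrow> 1) (at_right 0) \<and>
            (u \<longlongrightarrow> 0) at_top \<and>
            (\<forall>s>0. u s > 0))"
proof
  assume "\<exists>u u' u'' :: real \<Rightarrow> real.
            (\<forall>s>0. (u has_real_derivative u' s) (at s)) \<and>
            (\<forall>s>0. (u' has_real_derivative u'' s) (at s)) \<and>
            continuous_on {0<..} u'' \<and>
            (\<forall>s>0. u'' s + (real N - 1) / s * u' s + fnl p (u s) = 0) \<and>
            ((\<lambda>s. u s / (Aconst N p * s powr (- theta p))) \<longlongrightarrow> 1) (at_right 0) \<and>
            (u \<longlongrightarrow> 0) at_top \<and>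
            (\<forall>s>0. u s > 0)"
  then obtain u u' u'' :: "real \<Rightarrow> real" where
    du: "\<forall>s>0. (u has_real_derivative u' s) (at s)" and
    du': "\<forall>s>0. (u' has_real_derivative u'' s) (at s)" and
    eq: "\<forall>s>0. u'' s + (real N - 1) / s * u' s + fnl p (u s) = 0" and
    lim0: "((\<lambda>s. u s / (Aconst N p * s powr (- theta p))) \<longlongrightarrow> 1) (at_right 0)" and
    liminf: "(u \<longlongrightarrow> 0) at_top" and
    pos: "\<forall>s>0. u s > 0" by blast
  obtain m where m: "N = m + 3" using assms(1) by (metis add.commute le_Suc_ex)
  have mr: "real N = real m + 3" using m by simp
  have pp: "p * (real m + 1) > real m + 5"
    using assms(2) unfolding pS_def mr by (simp add: field_simps)
  have p1: "p > 1"
  proof -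
    have "(p - 1) * (real m + 1) > 0" using pp by (simp add: algebra_simps)
    moreover have "real m + 1 > 0" by simp
    ultimately show ?thesis by (simp add: zero_less_mult_iff)
  qed
  have cneg: "real (m+3) / (p+1) \<le> (real m + 1) / 2"
    using pp p1 by (simp add: field_simps)
  interpret sol m p u u' u''
  proof
    show "p > 1" by (rule p1)
    show "real (m+3) / (p+1) \<le> (real m + 1) / 2" by (rule cneg)
    show "\<And>s. s > 0 \<Longrightarrow> (u has_real_derivative u' s) (at s)" using du by blast
    show "\<And>s. s > 0 \<Longrightarrow> (u' has_real_derivative u'' s) (at s)" using du' by blast
    show "\<And>s. s > 0 \<Longrightarrow> u s > 0" using pos by blast
    fix s :: real assume s: "s > 0"
    have "u'' s + (real m + 2) / s * u' s + (- u s + u s powr p) = 0"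
      using eq s unfolding fnl_def mr by (simp add: add.commute)
    moreover have "- (real m + 2) / s * u' s = - ((real m + 2) / s * u' s)" by (simp only: minus_divide_left[symmetric] mult_minus_left)
    ultimately show "u'' s = - (real m + 2) / s * u' s + u s - u s powr p" by linarith
  qed
  define \<theta> where "\<theta> = theta p"
  have th0: "\<theta> > 0" using p1 by (simp add: \<theta>_def theta_def)
  have th1: "\<theta> * (p - 1) = 2" using p1 by (simp add: \<theta>_def theta_def field_simps)
  have e: "real m + 1 - 2*\<theta> > 0"
  proof -
    have "(real m + 1) * (p - 1) > 4" using pp by (simp add: algebra_simps)
    hence "4 / (p - 1) < real m + 1" using p1 by (simp add: field_simps)
    thus ?thesis using p1 by (simp add: \<theta>_def theta_def)
  qed
  have A0: "Aconst N p > 0"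
  proof -
    have "\<theta> * (real N - 2 - \<theta>) > 0" using th0 e mr by simp
    thus ?thesis unfolding Aconst_def \<theta>_def by (metis less_irrefl powr_gt_zero)
  qed
  show False
    using contra[OF th0 th1 e A0] lim0 liminf unfolding \<theta>_def by blast
qed

end
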